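(* Let $a\in(0,\frac23]$ and $f\in U_+$. For $x\in\mathbb R$ let $X^x_0=x$, $X^x_{n+1}=aX^x_n+\xi_{n+1}$, all driven by the same sequence $(\xi_n)$, and $\tau_x=\inf\{n\ge0:X^x_n<0\}$. Then for any $x,y\in[0,\frac1{1-a}]$ with $f(x)=f(y)$ we have $\tau_x=\tau_y$ and \[ f(X^x_{n\wedge\tau_x})=f(X^y_{n\wedge\tau_y})\quad\text{for all } n\ge1. \]
   Context: Let $p\in(0,1)$, $q=1-p$, and let $\xi_1,\xi_2,\dots$ be i.i.d. with $\mathbb P(\xi_1=1)=p$, $\mathbb P(\xi_1=-1)=q$. For $a\in(0,1)$ define $T_a$ by $T_a(x)=\frac1a(x+1)$ if $0\le x<1$ and $x\le\frac{2a-1}{1-a}$, and $T_a(x)=\frac1a(x-1)$ if $1\le x\le\frac1{1-a}$. Let $I_a=\big(\frac{2a-1}{1-a},1\big)$ and $\varkappa_a=\inf\{k\ge0:T_a^k(0)\in I_a\}$ ($\inf\emptyset=\infty$); the points $T_a^k(0)$ are defined for $0\le k\le\varkappa_a$. Let $U_+$ be the set of functions $f:\mathbb R\to\mathbb R$ of the form $f(x)=\sum_{k=0}^{\varkappa_a}u_k\mathbb 1\{x\ge T_a^k(0)\}$ with all $u_k>0$ and $\sum_k u_k<\infty$. *)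

theory Defs
  imports "HOL-Analysis.Analysis" "HOL-Library.Extended_Nat"
begin

definition Tmap :: "real \<Rightarrow> real \<Rightarrow> real" where
  "Tmap a x =
     (if 0 \<le> x \<and> x < 1 \<and> x \<le> (2*a - 1)/(1 - a) then (x + 1)/a
      else if 1 \<le> x \<and> x \<le> 1/(1 - a) then (x - 1)/a
      else undefined)"

definition orb :: "real \<Rightarrow> nat \<Rightarrow> real" where
  "orb a k = (Tmap a ^^ k) 0"

definition Iint :: "real \<Rightarrow> real set" where
  "Iint a = {(2*a - 1)/(1 - a) <..< 1}"

text \<open>The index set {k. 0 \<le> k \<le> kappa_a}: k \<le> kappa_a iff T_a^j(0) \<notin> I_a for all j < k.\<close>
definition Kset :: "real \<Rightarrow> nat set" where
  "Kset a = {k. \<forall>j<k. orb a j \<notin> Iint a}"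

definition Uplus :: "real \<Rightarrow> (real \<Rightarrow> real) set" where
  "Uplus a = {f. \<exists>u :: nat \<Rightarrow> real.
      (\<forall>k\<in>Kset a. u k > 0) \<and> u summable_on Kset a \<and>
      (\<forall>x. f x = (\<Sum>\<^sub>\<infinity>k\<in>Kset a. if x \<ge> orb a k then u k else 0))}"

text \<open>The chain X^x_n driven by the sequence xi (xi 0 unused; xi_1, xi_2, ... are xi 1, xi 2, ...).\<close>
primrec chain :: "real \<Rightarrow> (nat \<Rightarrow> real) \<Rightarrow> real \<Rightarrow> nat \<Rightarrow> real" where
  "chain a xi x 0 = x"
| "chain a xi x (Suc n) = a * chain a xi x n + xi (Suc n)"

definition hit_time :: "(nat \<Rightarrow> real) \<Rightarrow> enat" where
  "hit_time X = (if \<exists>n. X n < 0 then enat (LEAST n. X n < 0) else \<infinity>)"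

definition stopped :: "(nat \<Rightarrow> real) \<Rightarrow> nat \<Rightarrow> real" where
  "stopped X n = X (the_enat (min (enat n) (hit_time X)))"

end

theory Submission
  imports Defs
begin

lemma orb_0[simp]: "orb a 0 = 0" by (simp add: orb_def)
lemma orb_Suc: "orb a (Suc k) = Tmap a (orb a k)" by (simp add: orb_def)

lemma Tmap_plus:
  assumes "0 \<le> d" "d < 1" "d \<le> (2*a-1)/(1-a)"
  shows "Tmap a d = (d+1)/a"
  using assms by (simp add: Tmap_def)

lemma Tmap_minus:
  assumes "1 \<le> d" "d \<le> 1/(1-a)"
  shows "Tmap a d = (d-1)/a"
  using assms by (simp add: Tmap_def)

lemma Kset_0[simp]: "0 \<in> Kset a" by (simp add: Kset_def)

lemma Kset_Suc: "Suc k \<in> Kset a \<longleftrightarrow> k \<in> Kset a \<and> orb a k \<notin> Iint a"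
  by (auto simp: Kset_def less_Suc_eq)

lemma orb_range:
  assumes "0 < a" "a \<le> 2/3"
  shows "k \<in> Kset a \<Longrightarrow> 0 \<le> orb a k \<and> orb a k \<le> 1/(1-a)"
proof (induction k)
  case 0 then show ?case using assms by simp
next
  case (Suc k)
  have kK: "k \<in> Kset a" and nI: "orb a k \<notin> Iint a" using Suc.prems Kset_Suc by auto
  let ?d = "orb a k"
  have r: "0 \<le> ?d" "?d \<le> 1/(1-a)" using Suc.IH kK by auto
  have a1: "1 - a > 0" using assms by simp
  show ?case
  proof (cases "?d < 1")
    case True
    then have c: "?d \<le> (2*a-1)/(1-a)" using nI by (auto simp: Iint_def)
    have e: "orb a (Suc k) = (?d+1)/a" using Tmap_plus[OF r(1) True c] orb_Suc by simp
    have "(?d+1) \<le> (2*a-1)/(1-a) + 1" using c by simp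
    also have "\<dots> = a/(1-a)" using a1 by (simp add: field_simps)
    finally have h: "?d+1 \<le> a/(1-a)" .
    have "(?d+1)/a \<le> (a/(1-a))/a" using divide_right_mono[OF h, of a] assms by simp
    also have "\<dots> = 1/(1-a)" using assms by simp
    finally show ?thesis using e r assms by simp
  next
    case False
    have e: "orb a (Suc k) = (?d-1)/a" using Tmap_minus[of ?d a] False r orb_Suc by simp
    have "?d - 1 \<le> 1/(1-a) - 1" using r by simp
    also have "\<dots> = a/(1-a)" using a1 by (simp add: field_simps)
    finally have h: "?d-1 \<le> a/(1-a)" .
    have "(?d-1)/a \<le> (a/(1-a))/a" using divide_right_mono[OF h, of a] assms by simp
    also have "\<dots> = 1/(1-a)" using assms by simp
    finally show ?thesis using e False assms by simp
  qed
qed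

lemma orb_23_odd:
  "k \<ge> 1 \<Longrightarrow> \<exists>m::int. odd m \<and> orb (2/3) k * 2^k = of_int m"
proof (induction k)
  case 0 then show ?case by simp
next
  case (Suc k)
  show ?case
  proof (cases "k = 0")
    case True
    have "orb (2/3) (Suc 0) = 3/2" by (simp add: orb_Suc Tmap_def)
    then show ?thesis using True by (intro exI[of _ 3]) simp
  next
    case False
    then obtain m where m: "odd m" "orb (2/3) k * 2^k = of_int m" using Suc.IH by auto
    have kK: "k \<in> Kset (2/3)" by (simp add: Kset_def Iint_def)
    have r: "0 \<le> orb (2/3) k" "orb (2/3) k \<le> 3"
      using orb_range[of "2/3" k] kK by auto
    let ?d = "orb (2/3) k"
    have ev: "even ((2::int)^k)" using False by simp
    show ?thesis
    proof (cases "?d < 1")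
      case True
      have e: "orb (2/3) (Suc k) = (?d+1)*(3/2)"
        using Tmap_plus[of ?d "2/3"] True r orb_Suc by simp
      have "orb (2/3) (Suc k) * 2^(Suc k) = 3*(?d * 2^k) + 3 * 2^k"
        unfolding e by (simp add: algebra_simps)
      then have "orb (2/3) (Suc k) * 2^(Suc k) = of_int (3*(m + 2^k))"
        using m(2) by simp
      moreover have "odd (3*(m + 2^k))" using m(1) ev by simp
      ultimately show ?thesis by blast
    next
      case F: False
      have e: "orb (2/3) (Suc k) = (?d-1)*(3/2)"
        using Tmap_minus[of ?d "2/3"] F r orb_Suc by simp
      have "orb (2/3) (Suc k) * 2^(Suc k) = 3*(?d * 2^k) - 3 * 2^k"
        unfolding e by (simp add: algebra_simps)
      then have "orb (2/3) (Suc k) * 2^(Suc k) = of_int (3*(m - 2^k))"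
        using m(2) by simp
      moreover have "odd (3*(m - 2^k))" using m(1) ev by simp
      ultimately show ?thesis by blast
    qed
  qed
qed

lemma orb_23_ne1: "orb (2/3) k \<noteq> 1"
proof (cases "k = 0")
  case True then show ?thesis by simp
next
  case False
  then obtain m where m: "odd m" "orb (2/3) k * 2^k = of_int m" using orb_23_odd[of k] by auto
  show ?thesis
  proof
    assume "orb (2/3) k = 1"
    then have "(of_int (2^k) :: real) = of_int m" using m(2) by simp
    then have "2^k = m" by (metis of_int_eq_iff)
    then have "odd ((2::int)^k)" using m(1) by simp
    then show False using False by simp
  qed
qed

definition S :: "real \<Rightarrow> real \<Rightarrow> real \<Rightarrow> bool" where
  "S a x y = (\<forall>k\<in>Kset a. orb a k \<le> x \<longleftrightarrow> orb a k \<le> y)"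

lemma step_plus_aux:
  assumes "0 < a" "a \<le> 2/3" "S a x y" "0 \<le> x" "y \<le> 1/(1-a)" "k \<in> Kset a"
    "orb a k \<le> a*y+1"
  shows "orb a k \<le> a*x+1"
proof (rule ccontr)
  assume c: "\<not> ?thesis"
  let ?d = "orb a k"
  have d1: "?d > 1" using c assms by (smt (verit) mult_nonneg_nonneg)
  have r: "?d \<le> 1/(1-a)" using orb_range assms by blast
  have nI: "?d \<notin> Iint a" using d1 by (simp add: Iint_def)
  have sK: "Suc k \<in> Kset a" using Kset_Suc assms nI by blast
  have e: "orb a (Suc k) = (?d-1)/a" using Tmap_minus[of ?d a] d1 r orb_Suc by simp
  have "(?d-1)/a \<le> y" using assms(7) assms(1) by (simp add: divide_le_eq mult.commute)
  moreover have "\<not> (?d-1)/a \<le> x" using c assms(1) by (simp add: divide_le_eq mult.commute)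
  ultimately show False using assms(3) sK e by (auto simp: S_def)
qed

lemma step_minus_aux:
  assumes "0 < a" "a \<le> 2/3" "S a x y" "0 \<le> x" "y \<le> 1/(1-a)" "k \<in> Kset a"
    "orb a k \<le> a*y-1"
  shows "orb a k \<le> a*x-1"
proof (rule ccontr)
  assume c: "\<not> ?thesis"
  let ?d = "orb a k"
  have a1: "1 - a > 0" using assms by simp
  have r: "0 \<le> ?d" "?d \<le> 1/(1-a)" using orb_range assms by blast+
  have "?d + 1 \<le> a*y" using assms(7) by simp
  also have "\<dots> \<le> a/(1-a)" using assms(1,5) mult_left_mono[OF assms(5)] by simp
  finally have "?d \<le> a/(1-a) - 1" by simp
  also have "a/(1-a) - 1 = (2*a-1)/(1-a)" using a1 by (simp add: field_simps)
  finally have dc: "?d \<le> (2*a-1)/(1-a)" .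
  have ylt: "(?d+1)/a \<le> y" using assms(7) assms(1) by (simp add: le_divide_eq divide_le_eq mult.commute)
  have xgt: "\<not> (?d+1)/a \<le> x" using c assms(1) by (simp add: divide_le_eq mult.commute)
  show False
  proof (cases "?d < 1")
    case True
    have nI: "?d \<notin> Iint a" using dc by (simp add: Iint_def)
    have sK: "Suc k \<in> Kset a" using Kset_Suc assms nI by blast
    have e: "orb a (Suc k) = (?d+1)/a" using Tmap_plus[of ?d a] True dc r orb_Suc by simp
    show False using assms(3) sK e ylt xgt by (auto simp: S_def)
  next
    case False
    then have "1 \<le> (2*a-1)/(1-a)" using dc by simp
    then have "1 - a \<le> 2*a - 1" using a1 by (simp add: le_divide_eq)
    then have a23: "a = 2/3" using assms(2) by simp
    have e1: "(2*a-1)/(1-a) = 1" using a23 by simp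
    have "?d \<le> 1" using dc e1 by linarith
    then have "?d = 1" using False by simp
    then have "orb (2/3) k = 1" using a23 by simp
    then show False using orb_23_ne1 by simp
  qed
qed

lemma step:
  assumes "0 < a" "a \<le> 2/3" "S a x y" "0 \<le> x" "x \<le> 1/(1-a)" "0 \<le> y" "y \<le> 1/(1-a)"
    "e \<in> {1, -1}"
  shows "S a (a*x+e) (a*y+e)"
proof -
  have Syx: "S a y x" using assms(3) by (auto simp: S_def)
  show ?thesis
  proof (cases "e = 1")
    case True
    then show ?thesis unfolding S_def
      using step_plus_aux[OF assms(1,2,3,4,7)] step_plus_aux[OF assms(1,2) Syx assms(6,5)]
      by auto
  next
    case False
    then have "e = -1" using assms(8) by auto
    then show ?thesis unfolding S_def
      using step_minus_aux[OF assms(1,2,3,4,7)] step_minus_aux[OF assms(1,2) Syx assms(6,5)]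
      by auto
  qed
qed

lemma chain_le:
  assumes "0 < a" "a \<le> 2/3" "\<And>n. xi n \<in> {1, -1}" "x \<le> 1/(1-a)"
  shows "chain a xi x n \<le> 1/(1-a)"
proof (induction n)
  case 0 then show ?case using assms by simp
next
  case (Suc n)
  have a1: "1 - a > 0" using assms by simp
  have "a * chain a xi x n \<le> a * (1/(1-a))" by (rule mult_left_mono[OF Suc.IH]) (use assms in simp)
  moreover have "xi (Suc n) \<le> 1" using assms(3)[of "Suc n"] by auto
  moreover have "a * (1/(1-a)) + 1 = 1/(1-a)" using a1 by (simp add: field_simps)
  ultimately show ?case by simp
qed

lemma S_chain:
  assumes "0 < a" "a \<le> 2/3" "\<And>n. xi n \<in> {1, -1}"
    "x \<in> {0 .. 1/(1-a)}" "y \<in> {0 .. 1/(1-a)}" "S a x y"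
  shows "(\<forall>m<n. chain a xi x m \<ge> 0) \<Longrightarrow> S a (chain a xi x n) (chain a xi y n)"
proof (induction n)
  case 0 then show ?case using assms by simp
next
  case (Suc n)
  have IH: "S a (chain a xi x n) (chain a xi y n)" using Suc by auto
  have x0: "chain a xi x n \<ge> 0" using Suc.prems by auto
  have y0: "chain a xi y n \<ge> 0" using IH x0 Kset_0[of a] unfolding S_def by (metis orb_0)
  show ?case using step[OF assms(1,2) IH x0 chain_le[OF assms(1,2,3)] y0 chain_le[OF assms(1,2,3)] assms(3)]
    assms(4,5) by simp
qed

lemma hit_enat: "hit_time X = enat n \<longleftrightarrow> X n < 0 \<and> (\<forall>m<n. X m \<ge> 0)"
proof
  assume h: "hit_time X = enat n"
  then have ex: "\<exists>n. X n < 0" by (auto simp: hit_time_def split: if_splits)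
  then have "n = (LEAST n. X n < 0)" using h by (simp add: hit_time_def)
  then show "X n < 0 \<and> (\<forall>m<n. X m \<ge> 0)"
    using ex by (metis LeastI_ex not_less_Least not_le)
next
  assume a: "X n < 0 \<and> (\<forall>m<n. X m \<ge> 0)"
  then have "(LEAST n. X n < 0) = n"
    by (intro Least_equality) (auto simp: not_less[symmetric])
  then show "hit_time X = enat n" using a by (auto simp: hit_time_def)
qed

lemma hit_inf: "hit_time X = \<infinity> \<longleftrightarrow> (\<forall>n. X n \<ge> 0)"
  by (simp add: hit_time_def) (meson not_less)

lemma f_S:
  assumes "f \<in> Uplus a" "S a x y"
  shows "f x = f y"
proof -
  obtain u where u: "\<forall>x. f x = (\<Sum>\<^sub>\<infinity>k\<in>Kset a. if x \<ge> orb a k then u k else 0)"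
    using assms(1) by (auto simp: Uplus_def)
  show ?thesis apply (simp only: u) apply (rule infsum_cong) using assms(2) by (auto simp: S_def)
qed

lemma f_S_conv_aux:
  assumes "f \<in> Uplus a" "f x = f y" "k0 \<in> Kset a" "orb a k0 \<le> y"
  shows "orb a k0 \<le> x"
proof (rule ccontr)
  assume c: "\<not> ?thesis"
  obtain u where up: "\<forall>k\<in>Kset a. u k > 0" and us: "u summable_on Kset a"
    and u: "\<forall>x. f x = (\<Sum>\<^sub>\<infinity>k\<in>Kset a. if x \<ge> orb a k then u k else 0)"
    using assms(1) by (auto simp: Uplus_def)
  define gx where "gx = (\<lambda>k. if x \<ge> orb a k then u k else 0)"
  define gy where "gy = (\<lambda>k. if y \<ge> orb a k then u k else 0)"
  have xy: "x < y" using c assms(4) by simp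
  have sx: "gx summable_on Kset a"
    by (rule summable_on_comparison_test[OF us]) (use up in \<open>auto simp: gx_def less_imp_le\<close>)
  have sy: "gy summable_on Kset a"
    by (rule summable_on_comparison_test[OF us]) (use up in \<open>auto simp: gy_def less_imp_le\<close>)
  let ?R = "Kset a - {k0}"
  have ins: "Kset a = insert k0 ?R" using assms(3) by auto
  have sx': "gx summable_on ?R" using summable_on_subset[OF sx] by blast
  have sy': "gy summable_on ?R" using summable_on_subset[OF sy] by blast
  have fx: "f x = gx k0 + infsum gx ?R"
    using u infsum_insert[OF sx', of k0] ins unfolding gx_def by (metis Diff_iff singletonI)
  have fy: "f y = gy k0 + infsum gy ?R"
    using u infsum_insert[OF sy', of k0] ins unfolding gy_def by (metis Diff_iff singletonI)
  have "infsum gx ?R \<le> infsum gy ?R"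
    by (rule infsum_mono[OF sx' sy']) (use xy up in \<open>auto simp: gx_def gy_def less_imp_le\<close>)
  moreover have "gx k0 < gy k0" using c assms(4) up assms(3) by (simp add: gx_def gy_def)
  ultimately show False using fx fy assms(2) by simp
qed

theorem proposition2p3:
  fixes a :: real and f :: "real \<Rightarrow> real" and xi :: "nat \<Rightarrow> real" and x y :: real
  assumes "0 < a" "a \<le> 2/3"
    and "f \<in> Uplus a"
    and "\<And>n. xi n \<in> {1, -1}"
    and "x \<in> {0 .. 1/(1 - a)}" "y \<in> {0 .. 1/(1 - a)}"
    and "f x = f y"
  shows "hit_time (chain a xi x) = hit_time (chain a xi y) \<and>
         (\<forall>n\<ge>1. f (stopped (chain a xi x) n) = f (stopped (chain a xi y) n))"
proof -
  have Sxy: "S a x y" unfolding S_def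
    using f_S_conv_aux[OF assms(3) assms(7)] f_S_conv_aux[OF assms(3) assms(7)[symmetric]] by blast
  have Syx: "S a y x" using Sxy by (auto simp: S_def)
  let ?A = "chain a xi x" and ?B = "chain a xi y"
  have G: "\<And>n. (\<forall>m<n. ?A m \<ge> 0) \<Longrightarrow> (\<forall>m<n. ?B m \<ge> 0) \<and> (?A n < 0 \<longleftrightarrow> ?B n < 0)"
  proof -
    fix n assume h: "\<forall>m<n. ?A m \<ge> 0"
    have "\<And>m. m \<le> n \<Longrightarrow> (?A m \<ge> 0 \<longleftrightarrow> ?B m \<ge> 0)"
    proof -
      fix m assume "m \<le> n"
      then have "S a (?A m) (?B m)" using S_chain[OF assms(1,2,4,5,6) Sxy] h by auto
      then show "?A m \<ge> 0 \<longleftrightarrow> ?B m \<ge> 0" unfolding S_def using Kset_0[of a] by (metis orb_0)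
    qed
    then show "(\<forall>m<n. ?B m \<ge> 0) \<and> (?A n < 0 \<longleftrightarrow> ?B n < 0)" using h by (auto simp: not_le[symmetric])
  qed
  have G': "\<And>n. (\<forall>m<n. ?B m \<ge> 0) \<Longrightarrow> (\<forall>m<n. ?A m \<ge> 0)"
  proof -
    fix n assume h: "\<forall>m<n. ?B m \<ge> 0"
    have "\<And>m. m \<le> n \<Longrightarrow> (?B m \<ge> 0 \<longleftrightarrow> ?A m \<ge> 0)"
    proof -
      fix m assume "m \<le> n"
      then have "S a (?B m) (?A m)" using S_chain[OF assms(1,2,4,6,5) Syx] h by auto
      then show "?B m \<ge> 0 \<longleftrightarrow> ?A m \<ge> 0" unfolding S_def using Kset_0[of a] by (metis orb_0)
    qed
    then show "\<forall>m<n. ?A m \<ge> 0" using h by auto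
  qed
  have H: "hit_time ?A = hit_time ?B"
  proof (cases "hit_time ?A")
    case (enat n)
    then have "?A n < 0 \<and> (\<forall>m<n. ?A m \<ge> 0)" using hit_enat by metis
    then have "?B n < 0 \<and> (\<forall>m<n. ?B m \<ge> 0)" using G by blast
    then show ?thesis using enat hit_enat by metis
  next
    case infinity
    then have "\<forall>n. ?A n \<ge> 0" using hit_inf by metis
    then have "\<forall>n. ?B n \<ge> 0" using G by (metis not_less)
    then show ?thesis using infinity hit_inf by metis
  qed
  have "\<And>n. f (stopped ?A n) = f (stopped ?B n)"
  proof -
    fix n
    define m where "m = the_enat (min (enat n) (hit_time ?A))"
    have pre: "\<forall>j<m. ?A j \<ge> 0"
    proof (cases "hit_time ?A")
      case (enat t)
      then have "\<forall>j<t. ?A j \<ge> 0" using hit_enat by metis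
      moreover have "m \<le> t" using enat by (simp add: m_def)
      ultimately show ?thesis by auto
    next
      case infinity
      then show ?thesis using hit_inf by metis
    qed
    have "S a (?A m) (?B m)" using S_chain[OF assms(1,2,4,5,6) Sxy] pre by auto
    then have "f (?A m) = f (?B m)" using f_S[OF assms(3)] by blast
    then show "f (stopped ?A n) = f (stopped ?B n)" using H by (simp add: stopped_def m_def)
  qed
  then show ?thesis using H by blast
qed

end
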